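(* Let $n \ge k \ge 1$ be integers, let $G$ be a simple undirected graph on $n$ vertices, and let $P_1,\ldots,P_k$ be vertex-disjoint directed paths in $G$ covering $V(G)$ such that the digraph $D(G,P_1,\ldots,P_k)$ is acyclic. Then $\lvert E(G)\rvert \le kn - \binom{k+1}{2}$. Equivalently, $\Gamma(n,k) \le kn - \binom{k+1}{2}$.
   Context: $y \sim z$ means $y$ and $z$ are adjacent in $G$. A directed path in $G$ is a sequence $v_1 \to \cdots \to v_m$ ($m \ge 1$) of distinct vertices with $v_tv_{t+1} \in E(G)$; its arcs are $v_t \to v_{t+1}$. Vertex-disjoint and covering means every vertex lies in exactly one $P_j$. The digraph $D = D(G,P_1,\ldots,P_k)$ has vertex set $V(G)$, and for distinct $x,y$ there is an arc $x \to y$ iff either some $P_j$ contains the arc $x \to y$, or there is a vertex $z$ and a path $P_j$ with $x \to z$ an arc of $P_j$ and $y \sim z$. $\Gamma(n,k)$ is the maximum of $\lvert E(G)\rvert$ over all such $G$ on $n$ vertices with $k$ such paths for which $D$ is acyclic. *)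

theory Defs
  imports Main
begin

definition simple_graph :: "'a set \<Rightarrow> ('a \<Rightarrow> 'a \<Rightarrow> bool) \<Rightarrow> bool" where
  "simple_graph V E \<longleftrightarrow> finite V \<and> (\<forall>x y. E x y \<longrightarrow> E y x) \<and> (\<forall>x. \<not> E x x)
     \<and> (\<forall>x y. E x y \<longrightarrow> x \<in> V \<and> y \<in> V)"

definition edges :: "('a \<Rightarrow> 'a \<Rightarrow> bool) \<Rightarrow> 'a set set" where
  "edges E = {{x, y} | x y. E x y}"

definition path_arcs :: "'a list \<Rightarrow> ('a \<times> 'a) set" where
  "path_arcs p = set (zip p (tl p))"

definition is_dpath :: "'a set \<Rightarrow> ('a \<Rightarrow> 'a \<Rightarrow> bool) \<Rightarrow> 'a list \<Rightarrow> bool" where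
  "is_dpath V E p \<longleftrightarrow> p \<noteq> [] \<and> distinct p \<and> set p \<subseteq> V \<and> (\<forall>(x, y) \<in> path_arcs p. E x y)"

definition path_cover :: "'a set \<Rightarrow> ('a \<Rightarrow> 'a \<Rightarrow> bool) \<Rightarrow> 'a list list \<Rightarrow> bool" where
  "path_cover V E Ps \<longleftrightarrow> (\<forall>p \<in> set Ps. is_dpath V E p)
     \<and> (\<forall>i < length Ps. \<forall>j < length Ps. i \<noteq> j \<longrightarrow> set (Ps ! i) \<inter> set (Ps ! j) = {})
     \<and> (\<Union>p \<in> set Ps. set p) = V"

definition D_arcs :: "('a \<Rightarrow> 'a \<Rightarrow> bool) \<Rightarrow> 'a list list \<Rightarrow> ('a \<times> 'a) set" where
  "D_arcs E Ps = {(x, y). x \<noteq> y \<and>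
      ((\<exists>p \<in> set Ps. (x, y) \<in> path_arcs p) \<or>
       (\<exists>z. \<exists>p \<in> set Ps. (x, z) \<in> path_arcs p \<and> E y z))}"

end

theory Submission
  imports Defs
begin

lemma topo:
  assumes "finite S" "acyclic R"
  shows "\<exists>f. bij_betw f S {0..<card S} \<and> (\<forall>x\<in>S. \<forall>y\<in>S. (x,y)\<in>R \<longrightarrow> f x < f y)"
  using assms
proof (induction "card S" arbitrary: S)
  case 0
  then show ?case by (auto simp: bij_betw_def)
next
  case (Suc c)
  let ?R = "R \<inter> (S \<times> S)"
  have "finite ?R" using Suc.prems by auto
  moreover have "acyclic ?R" using Suc.prems acyclic_subset by blast
  ultimately have w: "wf (?R\<inverse>)" using finite_acyclic_wf acyclic_converse finite_converse by blast
  have "S \<noteq> {}" using Suc.hyps by auto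
  then obtain s where s: "s \<in> S" by auto
  from wf_eq_minimal[THEN iffD1, OF w, rule_format, OF s]
  obtain m where m: "m \<in> S" "\<And>y. (y, m) \<in> ?R\<inverse> \<Longrightarrow> y \<notin> S"
    by blast
  let ?S = "S - {m}"
  have cS: "card ?S = c" using Suc.hyps(2) m(1) Suc.prems(1) by simp
  have fS: "finite ?S" using Suc.prems by simp
  have "\<exists>g. bij_betw g ?S {0..<card ?S} \<and> (\<forall>x\<in>?S. \<forall>y\<in>?S. (x,y)\<in>R \<longrightarrow> g x < g y)"
    by (rule Suc.hyps(1)[OF cS[symmetric] fS Suc.prems(2)])
  then obtain g where g: "bij_betw g ?S {0..<c}" "\<forall>x\<in>?S. \<forall>y\<in>?S. (x,y)\<in>R \<longrightarrow> g x < g y"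
    unfolding cS by blast
  define f where "f = g(m := c)"
  have b1: "bij_betw f ?S {0..<c}" using g(1) unfolding f_def
    by (subst bij_betw_cong[where g=g]) auto
  have "bij_betw f (?S \<union> {m}) ({0..<c} \<union> {f m})"
  proof -
    have "m \<notin> ?S" by simp
    moreover have "f m \<notin> {0..<c}" by (simp add: f_def)
    ultimately show ?thesis using notIn_Un_bij_betw b1 by metis
  qed
  moreover have "?S \<union> {m} = S" using m(1) by auto
  moreover have "{0..<c} \<union> {f m} = {0..<card S}" using Suc.hyps(2) by (auto simp: f_def)
  ultimately have "bij_betw f S {0..<card S}" by simp
  moreover have "\<forall>x\<in>S. \<forall>y\<in>S. (x,y)\<in>R \<longrightarrow> f x < f y"
  proof (intro ballI impI)
    fix x y assume xy: "x \<in> S" "y \<in> S" "(x,y) \<in> R"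
    show "f x < f y"
    proof (cases "x = m")
      case True then show ?thesis using m(2)[of y] xy by auto
    next
      case False
      then have "g x < c" using g(1) xy by (auto simp: bij_betw_def)
      show ?thesis
      proof (cases "y = m")
        case True then show ?thesis using False \<open>g x < c\<close> by (simp add: f_def)
      next
        case False2: False
        then show ?thesis using False g(2) xy by (simp add: f_def)
      qed
    qed
  qed
  ultimately show ?case by blast
qed

lemma arc_nth:
  assumes "Suc i < length p"
  shows "(p!i, p!Suc i) \<in> path_arcs p"
  using assms unfolding path_arcs_def in_set_zip by (intro exI[of _ i]) (auto simp: nth_tl)

lemma sum_min_aux:
  "(\<Sum>i<n. min k i) + (k + 1 choose 2) = k * n + ((k - n) + 1 choose 2)"
proof (induction n)
  case 0 then show ?case by simp
next
  case (Suc n)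
  show ?case
  proof (cases "n < k")
    case True
    have e: "k - n = Suc (k - Suc n)" using True by simp
    have c: "(Suc (k - Suc n) + 1 choose 2) = (k - Suc n + 1 choose 2) + (k - Suc n + 1)"
      by (simp add: numeral_2_eq_2)
    show ?thesis using Suc.IH True unfolding e c by simp
  next
    case False
    then show ?thesis using Suc.IH by simp
  qed
qed

lemma sum_min:
  assumes "k \<le> (n::nat)"
  shows "(\<Sum>i<n. min k i) = k * n - (k + 1 choose 2)"
proof -
  have h: "k - n + 1 choose 2 = 0" using assms by simp
  show ?thesis using sum_min_aux[where n=n and k=k] unfolding h by linarith
qed

lemma path_mono:
  assumes ord: "\<And>x y. (x, y) \<in> path_arcs p \<Longrightarrow> f x < (f y::nat)"
  shows "i < j \<Longrightarrow> j < length p \<Longrightarrow> f (p!i) < f (p!j)"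
proof (induction j)
  case 0 then show ?case by simp
next
  case (Suc j)
  have a: "f (p!j) < f (p!Suc j)" using ord arc_nth Suc.prems by blast
  show ?case
  proof (cases "i = j")
    case True then show ?thesis using a by simp
  next
    case False then show ?thesis using Suc a by simp
  qed
qed

theorem lemma2:
  fixes V :: "'a set" and E :: "'a \<Rightarrow> 'a \<Rightarrow> bool" and Ps :: "'a list list" and n k :: nat
  assumes "1 \<le> k" and "k \<le> n"
    and "simple_graph V E" and "card V = n"
    and "length Ps = k" and "path_cover V E Ps"
    and "acyclic (D_arcs E Ps)"
  shows "card (edges E) \<le> k * n - (k + 1 choose 2)"
proof -
  have finV: "finite V" and sym: "\<And>x y. E x y \<Longrightarrow> E y x" and irr: "\<And>x. \<not> E x x"
    and inV: "\<And>x y. E x y \<Longrightarrow> x \<in> V \<and> y \<in> V"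
    using assms(3) unfolding simple_graph_def by blast+
  have paths: "\<And>p. p \<in> set Ps \<Longrightarrow> is_dpath V E p" and cover: "(\<Union>p \<in> set Ps. set p) = V"
    using assms(6) unfolding path_cover_def by blast+
  obtain f where fb: "bij_betw f V {0..<n}"
    and ford: "\<And>x y. x \<in> V \<Longrightarrow> y \<in> V \<Longrightarrow> (x,y) \<in> D_arcs E Ps \<Longrightarrow> f x < f y"
    using topo[OF finV assms(7)] assms(4) by blast
  have injf: "inj_on f V" and imf: "f ` V = {0..<n}" using fb by (auto simp: bij_betw_def)
  have arcE: "\<And>p x y. p \<in> set Ps \<Longrightarrow> (x, y) \<in> path_arcs p \<Longrightarrow> E x y"
    using paths unfolding is_dpath_def by blast
  have arcD: "\<And>p x y. p \<in> set Ps \<Longrightarrow> (x, y) \<in> path_arcs p \<Longrightarrow> x \<noteq> y \<Longrightarrow> f x < f y"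
  proof -
    fix p x y assume p: "p \<in> set Ps" "(x, y) \<in> path_arcs p" "x \<noteq> y"
    have "(x,y) \<in> D_arcs E Ps" unfolding D_arcs_def using p by blast
    moreover have "x \<in> V" "y \<in> V" using inV arcE p by blast+
    ultimately show "f x < f y" using ford by blast
  qed
  have pmono: "\<And>p i j. p \<in> set Ps \<Longrightarrow> i < j \<Longrightarrow> j < length p \<Longrightarrow> f (p!i) < f (p!j)"
  proof -
    fix p i j assume h: "p \<in> set Ps" "i < j" "j < length p"
    have "\<And>x y. (x, y) \<in> path_arcs p \<Longrightarrow> f x < f y"
      using arcD[OF h(1)] arcE[OF h(1)] irr by metis
    then show "f (p!i) < f (p!j)" using path_mono h(2,3) by blast
  qed
  define L where "L y = {z. E y z \<and> f y < f z}" for y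
  have LV: "L y \<subseteq> V" for y unfolding L_def using inV by blast
  have finL: "finite (L y)" for y using LV finV finite_subset by blast
  have one: "card (L y \<inter> set p) \<le> 1" if p: "p \<in> set Ps" for y p
  proof -
    have "a = b" if a: "a \<in> L y \<inter> set p" and b: "b \<in> L y \<inter> set p" and ab: "f a \<le> f b" for a b
    proof (rule ccontr)
      assume "a \<noteq> b"
      obtain i where i: "i < length p" "p!i = a" using a by (auto simp: in_set_conv_nth)
      obtain j where j: "j < length p" "p!j = b" using b by (auto simp: in_set_conv_nth)
      have "i \<noteq> j" using i j \<open>a \<noteq> b\<close> by auto
      have "i < j"
      proof (rule ccontr)
        assume "\<not> i < j"
        then have ji: "j < i" using \<open>i \<noteq> j\<close> by simp
        have "f b < f a" using pmono[OF p ji i(1)] i(2) j(2) by simp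
        then show False using ab by simp
      qed
      define x where "x = p ! (j - 1)"
      have jj: "Suc (j - 1) = j" using \<open>i < j\<close> by simp
      have arc: "(x, b) \<in> path_arcs p" using arc_nth[of "j - 1" p] j jj unfolding x_def by simp
      have fx: "f a \<le> f x"
      proof (cases "i = j - 1")
        case True then show ?thesis using i x_def by simp
      next
        case False
        then have "i < j - 1" using \<open>i < j\<close> by simp
        moreover have "j - 1 < length p" using j by simp
        ultimately show ?thesis using pmono[OF p, of i "j - 1"] i unfolding x_def by simp
      qed
      have ya: "f y < f a" "E y b" using a b unfolding L_def by auto
      show False
      proof (cases "x = y")
        case True then show False using fx ya by simp
      next
        case False
        have "(x, y) \<in> D_arcs E Ps" unfolding D_arcs_def using False arc p ya(2) by blast
        moreover have "x \<in> V" using inV arcE[OF p arc] by blast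
        moreover have "y \<in> V" using inV ya(2) by blast
        ultimately have "f x < f y" using ford by blast
        then show False using fx ya by simp
      qed
    qed
    then have "\<forall>a\<in>L y \<inter> set p. \<forall>b\<in>L y \<inter> set p. a = b" by (metis nat_le_linear)
    then show ?thesis using finL by (simp add: card_le_Suc0_iff_eq)
  qed
  have Lk: "card (L y) \<le> k" for y
  proof -
    have "L y \<subseteq> (\<Union>p\<in>set Ps. L y \<inter> set p)" using LV cover by blast
    then have "card (L y) \<le> card (\<Union>p\<in>set Ps. L y \<inter> set p)"
      by (intro card_mono) auto
    also have "\<dots> \<le> (\<Sum>p\<in>set Ps. card (L y \<inter> set p))" by (rule card_UN_le) simp
    also have "\<dots> \<le> (\<Sum>p\<in>set Ps. 1)" by (rule sum_mono) (use one in blast)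
    also have "\<dots> = card (set Ps)" by simp
    also have "\<dots> \<le> k" using assms(5) card_length by metis
    finally show ?thesis .
  qed
  have Ln: "card (L y) \<le> n - 1 - f y" if y: "y \<in> V" for y
  proof -
    have "L y \<subseteq> {z \<in> V. f y < f z}" using LV unfolding L_def by blast
    then have "card (L y) \<le> card {z \<in> V. f y < f z}" using finV by (intro card_mono) auto
    also have "\<dots> = card (f ` {z \<in> V. f y < f z})"
      using injf by (intro card_image[symmetric]) (auto intro: inj_on_subset)
    also have "\<dots> \<le> card {f y<..<n}"
      using imf by (intro card_mono) auto
    also have "\<dots> = n - 1 - f y" by simp
    finally show ?thesis .
  qed
  have "edges E \<subseteq> (\<Union>y\<in>V. (\<lambda>z. {y, z}) ` L y)"
  proof
    fix e assume "e \<in> edges E"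
    then obtain x y where e: "e = {x, y}" "E x y" unfolding edges_def by blast
    have xy: "x \<in> V" "y \<in> V" "x \<noteq> y" using inV e irr by auto
    then have "f x \<noteq> f y" using injf by (auto simp: inj_on_def)
    then consider "f x < f y" | "f y < f x" by linarith
    then show "e \<in> (\<Union>y\<in>V. (\<lambda>z. {y, z}) ` L y)"
    proof cases
      case 1 then have "y \<in> L x" using e unfolding L_def by simp
      then show ?thesis using e xy by blast
    next
      case 2 then have "x \<in> L y" using e sym unfolding L_def by simp
      then show ?thesis using e xy by blast
    qed
  qed
  then have "card (edges E) \<le> card (\<Union>y\<in>V. (\<lambda>z. {y, z}) ` L y)"
    using finV finL by (intro card_mono) auto
  also have "\<dots> \<le> (\<Sum>y\<in>V. card ((\<lambda>z. {y, z}) ` L y))" by (rule card_UN_le[OF finV])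
  also have "\<dots> \<le> (\<Sum>y\<in>V. card (L y))" by (intro sum_mono card_image_le finL)
  also have "\<dots> \<le> (\<Sum>y\<in>V. min k (n - 1 - f y))" by (intro sum_mono) (use Lk Ln in simp)
  also have "\<dots> = (\<Sum>i\<in>{0..<n}. min k (n - 1 - i))"
    using sum.reindex_bij_betw[OF fb, of "\<lambda>i. min k (n - 1 - i)"] by simp
  also have "\<dots> = (\<Sum>i<n. min k (n - Suc i))" by (simp add: atLeast0LessThan)
  also have "\<dots> = (\<Sum>i<n. min k i)" by (rule sum.nat_diff_reindex)
  also have "\<dots> = k * n - (k + 1 choose 2)" using sum_min assms(2) by blast
  finally show ?thesis .
qed

end
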